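(* Let $T=((\Omega,\mathcal{A}),\{(\Omega,\mathcal{M}_i)\}_{i\in N},\{t_i\}_{i\in N})$ be a type space. The players' beliefs in $T$ are universally consistent if and only if for every $I\subseteq N$ (not necessarily finite) and every $I$-common certainty component $S$ there exists $P\in\bigcap_{i\in I}\Pi_i$ with $\inf\{P(E):E\in\mathcal{A},S\subseteq E\}>0$.
   Context: A field on a set $X$ is a collection of subsets of $X$ containing $X$ and closed under complements and finite intersections. For a field $\mathcal{A}$ on $\Omega$, $\mathrm{pba}(\Omega,\mathcal{A})$ is the set of finitely additive nonnegative $P:\mathcal{A}\to\mathbb{R}$ with $P(\Omega)=1$; $B(\Omega,\mathcal{A})$ the sup-norm closure of the linear span of indicators of sets in $\mathcal{A}$; bounded finitely additive set functions carry the weak* topology (weakest making $\mu\mapsto\int f\,d\mu$ continuous for all $f\in B(\Omega,\mathcal{A})$), $\overline{\,\cdot\,}^\ast$ denotes weak* closure. A type space: $N$ a nonempty set of players, fields $\mathcal{M}_i\subseteq\mathcal{A}$ on a set $\Omega$, $t_i:\Omega\times\mathcal{A}\to[0,1]$ with $t_i(\omega,\cdot)\in\mathrm{pba}(\Omega,\mathcal{A})$, $t_i(\cdot,E)\in B(\Omega,\mathcal{M}_i)$ for $E\in\mathcal{A}$, and $t_i(\omega,E)=1$ whenever $E\in\mathcal{M}_i$, $\omega\in E$. $\Pi_i=\overline{\mathrm{conv}\{t_i(\omega,\cdot):\omega\in\Omega\}}^\ast$ (equivalently the $P\in\mathrm{pba}(\Omega,\mathcal{A})$ with $P(E\cap F)=\int_F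 t_i(\cdot,E)\,dP$ for all $E\in\mathcal{A},F\in\mathcal{M}_i$). For $I\subseteq N$, a nonempty $S\subseteq\Omega$ is an $I$-common certainty component if there is $E\in\mathcal{A}$ with $E\subseteq S$ and $t_i(\omega,E)=1$ for all $\omega\in S$, $i\in I$. The players' beliefs are universally consistent if for every finite $I\subseteq N$ and every $I$-common certainty component $S$ there exists $P\in\bigcap_{i\in I}\Pi_i$ with $\inf\{P(E):E\in\mathcal{A},S\subseteq E\}>0$. *)

theory Defs
  imports "HOL-Analysis.Analysis"
begin

definition is_field :: "'a set \<Rightarrow> 'a set set \<Rightarrow> bool" where
  "is_field X A \<longleftrightarrow> A \<subseteq> Pow X \<and> X \<in> A \<and> (\<forall>E\<in>A. X - E \<in> A)
     \<and> (\<forall>E\<in>A. \<forall>F\<in>A. E \<inter> F \<in> A)"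

definition bfa :: "'a set \<Rightarrow> 'a set set \<Rightarrow> ('a set \<Rightarrow> real) set" where
  "bfa \<Omega> A = {\<mu>. (\<forall>E\<in>A. \<forall>F\<in>A. E \<inter> F = {} \<longrightarrow> \<mu> (E \<union> F) = \<mu> E + \<mu> F)
                 \<and> (\<exists>c. \<forall>E\<in>A. \<bar>\<mu> E\<bar> \<le> c)}"

definition pba :: "'a set \<Rightarrow> 'a set set \<Rightarrow> ('a set \<Rightarrow> real) set" where
  "pba \<Omega> A = {P. (\<forall>E\<in>A. \<forall>F\<in>A. E \<inter> F = {} \<longrightarrow> P (E \<union> F) = P E + P F)
                 \<and> (\<forall>E\<in>A. 0 \<le> P E) \<and> P \<Omega> = 1}"

text \<open>B(\<Omega>,A): sup-norm (on \<Omega>) closure of the span of indicators of sets in A.\<close>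
definition Bfun :: "'a set \<Rightarrow> 'a set set \<Rightarrow> ('a \<Rightarrow> real) set" where
  "Bfun \<Omega> A = {f. \<forall>\<epsilon>>0. \<exists>F c. finite F \<and> F \<subseteq> A \<and>
       (\<forall>x\<in>\<Omega>. \<bar>f x - (\<Sum>E\<in>F. c E * indicator E x)\<bar> < \<epsilon>)}"

definition fa_integral :: "'a set \<Rightarrow> 'a set set \<Rightarrow> ('a set \<Rightarrow> real) \<Rightarrow> ('a \<Rightarrow> real) \<Rightarrow> real" where
  "fa_integral \<Omega> A \<mu> f = (THE r. \<forall>\<epsilon>>0. \<exists>\<delta>>0. \<forall>F c. finite F \<and> F \<subseteq> A \<and>
       (\<forall>x\<in>\<Omega>. \<bar>f x - (\<Sum>E\<in>F. c E * indicator E x)\<bar> < \<delta>) \<longrightarrow>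
       \<bar>(\<Sum>E\<in>F. c E * \<mu> E) - r\<bar> < \<epsilon>)"

definition weak_star :: "'a set \<Rightarrow> 'a set set \<Rightarrow> ('a set \<Rightarrow> real) topology" where
  "weak_star \<Omega> A = subtopology
     (topology_generated_by
        {{\<mu> \<in> bfa \<Omega> A. fa_integral \<Omega> A \<mu> f \<in> U} | f U. f \<in> Bfun \<Omega> A \<and> open U})
     (bfa \<Omega> A)"

definition type_space :: "'a set \<Rightarrow> 'a set set \<Rightarrow> 'i set \<Rightarrow> ('i \<Rightarrow> 'a set set)
     \<Rightarrow> ('i \<Rightarrow> 'a \<Rightarrow> 'a set \<Rightarrow> real) \<Rightarrow> bool" where
  "type_space \<Omega> A N M t \<longleftrightarrow> N \<noteq> {} \<and> is_field \<Omega> A \<and>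
     (\<forall>i\<in>N. is_field \<Omega> (M i) \<and> M i \<subseteq> A \<and>
        (\<forall>\<omega>\<in>\<Omega>. \<forall>E\<in>A. 0 \<le> t i \<omega> E \<and> t i \<omega> E \<le> 1) \<and>
        (\<forall>\<omega>\<in>\<Omega>. t i \<omega> \<in> pba \<Omega> A) \<and>
        (\<forall>E\<in>A. (\<lambda>\<omega>. t i \<omega> E) \<in> Bfun \<Omega> (M i)) \<and>
        (\<forall>E\<in>M i. \<forall>\<omega>\<in>E. t i \<omega> E = 1))"

definition type_conv :: "'a set \<Rightarrow> ('a \<Rightarrow> 'a set \<Rightarrow> real) \<Rightarrow> ('a set \<Rightarrow> real) set" where
  "type_conv \<Omega> ti = {P. \<exists>W a. finite W \<and> W \<noteq> {} \<and> W \<subseteq> \<Omega> \<and> (\<forall>\<omega>\<in>W. 0 \<le> a \<omega>)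
      \<and> (\<Sum>\<omega>\<in>W. a \<omega>) = 1 \<and> P = (\<lambda>E. \<Sum>\<omega>\<in>W. a \<omega> * ti \<omega> E)}"

definition Pi_set :: "'a set \<Rightarrow> 'a set set \<Rightarrow> ('i \<Rightarrow> 'a \<Rightarrow> 'a set \<Rightarrow> real) \<Rightarrow> 'i
     \<Rightarrow> ('a set \<Rightarrow> real) set" where
  "Pi_set \<Omega> A t i = (weak_star \<Omega> A) closure_of (type_conv \<Omega> (t i))"

definition cc_component :: "'a set \<Rightarrow> 'a set set \<Rightarrow> ('i \<Rightarrow> 'a \<Rightarrow> 'a set \<Rightarrow> real)
     \<Rightarrow> 'i set \<Rightarrow> 'a set \<Rightarrow> bool" where
  "cc_component \<Omega> A t I S \<longleftrightarrow> S \<noteq> {} \<and> S \<subseteq> \<Omega> \<and>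
     (\<exists>E\<in>A. E \<subseteq> S \<and> (\<forall>\<omega>\<in>S. \<forall>i\<in>I. t i \<omega> E = 1))"

text \<open>Existence of a common prior-like P \<in> pba \<inter> \<Inter>_{i\<in>I} \<Pi>_i charging S (outer measure > 0).\<close>
definition consistent_on :: "'a set \<Rightarrow> 'a set set \<Rightarrow> ('i \<Rightarrow> 'a \<Rightarrow> 'a set \<Rightarrow> real)
     \<Rightarrow> 'i set \<Rightarrow> 'a set \<Rightarrow> bool" where
  "consistent_on \<Omega> A t I S \<longleftrightarrow> (\<exists>P\<in>pba \<Omega> A. (\<forall>i\<in>I. P \<in> Pi_set \<Omega> A t i) \<and>
      Inf {P E | E. E \<in> A \<and> S \<subseteq> E} > 0)"

definition universally_consistent :: "'a set \<Rightarrow> 'a set set \<Rightarrow> 'i set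
     \<Rightarrow> ('i \<Rightarrow> 'a \<Rightarrow> 'a set \<Rightarrow> real) \<Rightarrow> bool" where
  "universally_consistent \<Omega> A N t \<longleftrightarrow>
     (\<forall>I. I \<subseteq> N \<and> finite I \<longrightarrow> (\<forall>S. cc_component \<Omega> A t I S \<longrightarrow> consistent_on \<Omega> A t I S))"

end

theory Submission
  imports Defs
begin


lemma field_sub: "is_field \<Omega> A \<Longrightarrow> E \<in> A \<Longrightarrow> E \<subseteq> \<Omega>"
  by (auto simp: is_field_def)
lemma field_top: "is_field \<Omega> A \<Longrightarrow> \<Omega> \<in> A"
  by (auto simp: is_field_def)
lemma field_compl: "is_field \<Omega> A \<Longrightarrow> E \<in> A \<Longrightarrow> \<Omega> - E \<in> A"
  by (auto simp: is_field_def)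
lemma field_Int: "is_field \<Omega> A \<Longrightarrow> E \<in> A \<Longrightarrow> F \<in> A \<Longrightarrow> E \<inter> F \<in> A"
  by (auto simp: is_field_def)
lemma field_empty: "is_field \<Omega> A \<Longrightarrow> {} \<in> A"
  using field_compl[of \<Omega> A \<Omega>] field_top[of \<Omega> A] by simp
lemma field_diff: "is_field \<Omega> A \<Longrightarrow> E \<in> A \<Longrightarrow> F \<in> A \<Longrightarrow> E - F \<in> A"
proof -
  assume a: "is_field \<Omega> A" "E \<in> A" "F \<in> A"
  have "E - F = E \<inter> (\<Omega> - F)" using field_sub[OF a(1,2)] by auto
  then show ?thesis using a field_Int field_compl by metis
qed
lemma field_Un: "is_field \<Omega> A \<Longrightarrow> E \<in> A \<Longrightarrow> F \<in> A \<Longrightarrow> E \<union> F \<in> A"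
proof -
  assume a: "is_field \<Omega> A" "E \<in> A" "F \<in> A"
  have "E \<union> F = \<Omega> - ((\<Omega> - E) \<inter> (\<Omega> - F))" using field_sub[OF a(1,2)] field_sub[OF a(1,3)] by auto
  then show ?thesis using a field_Int field_compl by metis
qed

lemma pba_add: "P \<in> pba \<Omega> A \<Longrightarrow> E \<in> A \<Longrightarrow> F \<in> A \<Longrightarrow> E \<inter> F = {} \<Longrightarrow> P (E \<union> F) = P E + P F"
  by (auto simp: pba_def)
lemma pba_nonneg: "P \<in> pba \<Omega> A \<Longrightarrow> E \<in> A \<Longrightarrow> 0 \<le> P E"
  by (auto simp: pba_def)
lemma pba_top: "P \<in> pba \<Omega> A \<Longrightarrow> P \<Omega> = 1"
  by (auto simp: pba_def)
lemma pba_empty: "is_field \<Omega> A \<Longrightarrow> P \<in> pba \<Omega> A \<Longrightarrow> P {} = 0"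
  using pba_add[of P \<Omega> A "{}" "{}"] field_empty by auto
lemma pba_split: "is_field \<Omega> A \<Longrightarrow> P \<in> pba \<Omega> A \<Longrightarrow> E \<in> A \<Longrightarrow> B \<in> A \<Longrightarrow>
   P E = P (E \<inter> B) + P (E - B)"
proof -
  assume a: "is_field \<Omega> A" "P \<in> pba \<Omega> A" "E \<in> A" "B \<in> A"
  have "E = (E \<inter> B) \<union> (E - B)" by auto
  then show ?thesis using pba_add[OF a(2), of "E \<inter> B" "E - B"] field_Int[OF a(1,3,4)] field_diff[OF a(1,3,4)]
    by auto
qed
lemma pba_mono: "is_field \<Omega> A \<Longrightarrow> P \<in> pba \<Omega> A \<Longrightarrow> E \<in> A \<Longrightarrow> F \<in> A \<Longrightarrow> E \<subseteq> F \<Longrightarrow> P E \<le> P F"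
proof -
  assume a: "is_field \<Omega> A" "P \<in> pba \<Omega> A" "E \<in> A" "F \<in> A" "E \<subseteq> F"
  have "P F = P (F \<inter> E) + P (F - E)" using pba_split[OF a(1,2,4,3)] .
  moreover have "F \<inter> E = E" using a(5) by auto
  moreover have "0 \<le> P (F - E)" using pba_nonneg[OF a(2) field_diff[OF a(1,4,3)]] .
  ultimately show ?thesis by simp
qed
lemma pba_le1: "is_field \<Omega> A \<Longrightarrow> P \<in> pba \<Omega> A \<Longrightarrow> E \<in> A \<Longrightarrow> P E \<le> 1"
  using pba_mono[of \<Omega> A P E \<Omega>] field_top field_sub pba_top by metis
lemma pba_compl: "is_field \<Omega> A \<Longrightarrow> P \<in> pba \<Omega> A \<Longrightarrow> E \<in> A \<Longrightarrow> P (\<Omega> - E) = 1 - P E"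
proof -
  assume a: "is_field \<Omega> A" "P \<in> pba \<Omega> A" "E \<in> A"
  have "P \<Omega> = P (\<Omega> \<inter> E) + P (\<Omega> - E)" using pba_split[OF a(1,2) field_top[OF a(1)] a(3)] .
  moreover have "\<Omega> \<inter> E = E" using field_sub[OF a(1,3)] by auto
  ultimately show ?thesis using pba_top[OF a(2)] by simp
qed

lemma simple_bound:
  assumes fld: "is_field \<Omega> A" and P: "P \<in> pba \<Omega> A"
  shows "finite F \<Longrightarrow> F \<subseteq> A \<Longrightarrow> B \<in> A \<Longrightarrow> (\<forall>x\<in>B. (\<Sum>E\<in>F. c E * indicator E x) \<le> K)
     \<Longrightarrow> (\<Sum>E\<in>F. c E * P (E \<inter> B)) \<le> K * P B"
proof (induction F arbitrary: B K rule: finite_induct)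
  case empty
  show ?case
  proof (cases "B = {}")
    case True then show ?thesis using pba_empty[OF fld P] by simp
  next
    case False
    then obtain x where "x \<in> B" by auto
    then have "0 \<le> K" using empty by auto
    then show ?thesis using pba_nonneg[OF P empty(2)] by simp
  qed
next
  case (insert E0 F)
  have E0: "E0 \<in> A" and FA: "F \<subseteq> A" using insert by auto
  have B1: "B \<inter> E0 \<in> A" using field_Int[OF fld insert(5) E0] .
  have B2: "B - E0 \<in> A" using field_diff[OF fld insert(5) E0] .
  have h1: "\<forall>x\<in>B \<inter> E0. (\<Sum>E\<in>F. c E * indicator E x) \<le> K - c E0"
  proof
    fix x assume x: "x \<in> B \<inter> E0"
    then have "(\<Sum>E\<in>insert E0 F. c E * indicator E x) \<le> K" using insert(6) by auto
    moreover have "(\<Sum>E\<in>insert E0 F. c E * indicator E x) = c E0 * indicator E0 x + (\<Sum>E\<in>F. c E * indicator E x)"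
      by (rule sum.insert[OF insert(1,2)])
    moreover have "c E0 * indicator E0 x = c E0" using x by simp
    ultimately show "(\<Sum>E\<in>F. c E * indicator E x) \<le> K - c E0" by linarith
  qed
  have h2: "\<forall>x\<in>B - E0. (\<Sum>E\<in>F. c E * indicator E x) \<le> K"
  proof
    fix x assume x: "x \<in> B - E0"
    then have "(\<Sum>E\<in>insert E0 F. c E * indicator E x) \<le> K" using insert(6) by auto
    moreover have "(\<Sum>E\<in>insert E0 F. c E * indicator E x) = c E0 * indicator E0 x + (\<Sum>E\<in>F. c E * indicator E x)"
      by (rule sum.insert[OF insert(1,2)])
    moreover have "c E0 * indicator E0 x = 0" using x by simp
    ultimately show "(\<Sum>E\<in>F. c E * indicator E x) \<le> K" by linarith
  qed
  have IH1: "(\<Sum>E\<in>F. c E * P (E \<inter> (B \<inter> E0))) \<le> (K - c E0) * P (B \<inter> E0)"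
    using insert(3)[OF FA B1 h1] .
  have IH2: "(\<Sum>E\<in>F. c E * P (E \<inter> (B - E0))) \<le> K * P (B - E0)"
    using insert(3)[OF FA B2 h2] .
  have split: "\<And>E. E \<in> F \<Longrightarrow> P (E \<inter> B) = P (E \<inter> (B \<inter> E0)) + P (E \<inter> (B - E0))"
  proof -
    fix E assume "E \<in> F"
    then have "E \<in> A" using FA by auto
    then have "P (E \<inter> B) = P ((E \<inter> B) \<inter> E0) + P ((E \<inter> B) - E0)"
      using pba_split[OF fld P field_Int[OF fld _ insert(5)] E0] by blast
    moreover have "(E \<inter> B) \<inter> E0 = E \<inter> (B \<inter> E0)" "(E \<inter> B) - E0 = E \<inter> (B - E0)" by auto
    ultimately show "P (E \<inter> B) = P (E \<inter> (B \<inter> E0)) + P (E \<inter> (B - E0))" by simp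
  qed
  have "(\<Sum>E\<in>F. c E * P (E \<inter> B)) = (\<Sum>E\<in>F. c E * P (E \<inter> (B \<inter> E0))) + (\<Sum>E\<in>F. c E * P (E \<inter> (B - E0)))"
    by (simp add: split distrib_left sum.distrib)
  moreover have "P B = P (B \<inter> E0) + P (B - E0)" using pba_split[OF fld P insert(5) E0] .
  moreover have "P (E0 \<inter> B) = P (B \<inter> E0)" by (simp add: Int_commute)
  ultimately show ?case using IH1 IH2 insert(1,2) by (simp add: algebra_simps)
qed

lemma simple_abs:
  assumes fld: "is_field \<Omega> A" and P: "P \<in> pba \<Omega> A" and F: "finite F" "F \<subseteq> A"
    and b: "\<forall>x\<in>\<Omega>. \<bar>\<Sum>E\<in>F. c E * indicator E x\<bar> \<le> d"
  shows "\<bar>\<Sum>E\<in>F. c E * P E\<bar> \<le> d"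
proof -
  have eq: "\<And>E. E \<in> F \<Longrightarrow> E \<inter> \<Omega> = E" using F field_sub[OF fld] by auto
  have "(\<Sum>E\<in>F. c E * P (E \<inter> \<Omega>)) \<le> d * P \<Omega>"
    by (rule simple_bound[OF fld P F field_top[OF fld]]) (use b in auto)
  then have u: "(\<Sum>E\<in>F. c E * P E) \<le> d" using eq pba_top[OF P] by simp
  have "(\<Sum>E\<in>F. (- c E) * P (E \<inter> \<Omega>)) \<le> d * P \<Omega>"
    apply (rule simple_bound[OF fld P F field_top[OF fld]])
    using b by (auto simp: sum_negf)
  then have l: "- (\<Sum>E\<in>F. c E * P E) \<le> d" using eq pba_top[OF P] by (simp add: sum_negf)
  show ?thesis using u l by linarith
qed

lemma sum_union_diff:
  fixes g :: "'b \<Rightarrow> real"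
  assumes "finite F1" "finite F2"
  shows "(\<Sum>E\<in>F1. c1 E * g E) - (\<Sum>E\<in>F2. c2 E * g E) =
    (\<Sum>E\<in>F1 \<union> F2. ((if E \<in> F1 then c1 E else 0) - (if E \<in> F2 then c2 E else 0)) * g E)"
proof -
  have a: "(\<Sum>E\<in>F1 \<union> F2. (if E \<in> F1 then c1 E else 0) * g E) = (\<Sum>E\<in>F1. c1 E * g E)"
    by (rule sum.mono_neutral_cong_right) (use assms in auto)
  have b: "(\<Sum>E\<in>F1 \<union> F2. (if E \<in> F2 then c2 E else 0) * g E) = (\<Sum>E\<in>F2. c2 E * g E)"
    by (rule sum.mono_neutral_cong_right) (use assms in auto)
  show ?thesis using a b by (simp add: left_diff_distrib sum_subtractf)
qed

lemma simple_diff: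
  assumes fld: "is_field \<Omega> A" and P: "P \<in> pba \<Omega> A" and F: "finite F1" "F1 \<subseteq> A" "finite F2" "F2 \<subseteq> A"
    and b: "\<forall>x\<in>\<Omega>. \<bar>(\<Sum>E\<in>F1. c1 E * indicator E x) - (\<Sum>E\<in>F2. c2 E * indicator E x)\<bar> \<le> d"
  shows "\<bar>(\<Sum>E\<in>F1. c1 E * P E) - (\<Sum>E\<in>F2. c2 E * P E)\<bar> \<le> d"
proof -
  let ?c = "\<lambda>E. (if E \<in> F1 then c1 E else 0) - (if E \<in> F2 then c2 E else 0)"
  have "\<forall>x\<in>\<Omega>. \<bar>\<Sum>E\<in>F1 \<union> F2. ?c E * indicator E x\<bar> \<le> d"
  proof
    fix x assume "x \<in> \<Omega>"
    then have "\<bar>(\<Sum>E\<in>F1. c1 E * indicator E x) - (\<Sum>E\<in>F2. c2 E * indicator E x)\<bar> \<le> d" using b by blast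
    then show "\<bar>\<Sum>E\<in>F1 \<union> F2. ?c E * indicator E x\<bar> \<le> d"
      by (subst (asm) sum_union_diff[OF F(1,3), of c1 "\<lambda>E. indicator E x" c2])
  qed
  then have "\<bar>\<Sum>E\<in>F1 \<union> F2. ?c E * P E\<bar> \<le> d"
    using simple_abs[OF fld P, of "F1 \<union> F2" ?c d] F by simp
  then show ?thesis using sum_union_diff[OF F(1,3), of c1 P c2] by simp
qed



definition apx_rep :: "'a set \<Rightarrow> 'a set set \<Rightarrow> ('a \<Rightarrow> real) \<Rightarrow> 'a set set \<Rightarrow> ('a set \<Rightarrow> real) \<Rightarrow> real \<Rightarrow> bool" where
  "apx_rep \<Omega> A f F c \<delta> \<longleftrightarrow> finite F \<and> F \<subseteq> A \<and> (\<forall>x\<in>\<Omega>. \<bar>f x - (\<Sum>E\<in>F. c E * indicator E x)\<bar> < \<delta>)"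

lemma aux_contra: "\<bar>s - r\<bar> < e \<Longrightarrow> \<bar>s - r0\<bar> \<le> e \<Longrightarrow> e = \<bar>r - r0\<bar> / 2 \<Longrightarrow> False" for s r r0 e :: real
  by (cases "r \<le> r0"; cases "s \<le> r"; cases "s \<le> r0"; simp add: abs_if split: if_splits)

lemma rep_close:
  assumes fld: "is_field \<Omega> A" and P: "P \<in> pba \<Omega> A"
    and r1: "apx_rep \<Omega> A f F1 c1 d1" and r2: "apx_rep \<Omega> A f F2 c2 d2"
  shows "\<bar>(\<Sum>E\<in>F1. c1 E * P E) - (\<Sum>E\<in>F2. c2 E * P E)\<bar> \<le> d1 + d2"
proof (rule simple_diff[OF fld P])
  show "finite F1" "F1 \<subseteq> A" "finite F2" "F2 \<subseteq> A" using r1 r2 by (auto simp: apx_rep_def)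
  show "\<forall>x\<in>\<Omega>. \<bar>(\<Sum>E\<in>F1. c1 E * indicator E x) - (\<Sum>E\<in>F2. c2 E * indicator E x)\<bar> \<le> d1 + d2"
  proof
    fix x assume x: "x \<in> \<Omega>"
    have "\<bar>f x - (\<Sum>E\<in>F1. c1 E * indicator E x)\<bar> < d1" "\<bar>f x - (\<Sum>E\<in>F2. c2 E * indicator E x)\<bar> < d2"
      using r1 r2 x by (auto simp: apx_rep_def)
    then show "\<bar>(\<Sum>E\<in>F1. c1 E * indicator E x) - (\<Sum>E\<in>F2. c2 E * indicator E x)\<bar> \<le> d1 + d2" by linarith
  qed
qed

lemma Bfun_rep: "f \<in> Bfun \<Omega> A \<Longrightarrow> \<epsilon> > 0 \<Longrightarrow> \<exists>F c. apx_rep \<Omega> A f F c \<epsilon>"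
  by (auto simp: Bfun_def apx_rep_def)

lemma fa_char:
  assumes fld: "is_field \<Omega> A" and P: "P \<in> pba \<Omega> A" and f: "f \<in> Bfun \<Omega> A"
  shows "apx_rep \<Omega> A f F c \<delta> \<Longrightarrow> \<bar>(\<Sum>E\<in>F. c E * P E) - fa_integral \<Omega> A P f\<bar> \<le> \<delta>"
proof -
  define L where "L = {(\<Sum>E\<in>F. c E * P E) - \<delta> | F c \<delta>. apx_rep \<Omega> A f F c \<delta>}"
  obtain F0 c0 where r0: "apx_rep \<Omega> A f F0 c0 1" using Bfun_rep[OF f] by fastforce
  have ne: "L \<noteq> {}" using r0 unfolding L_def by blast
  have bdd: "bdd_above L"
  proof
    fix y assume "y \<in> L"
    then obtain F c \<delta> where "apx_rep \<Omega> A f F c \<delta>" and y: "y = (\<Sum>E\<in>F. c E * P E) - \<delta>" unfolding L_def by blast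
    then have "\<bar>(\<Sum>E\<in>F. c E * P E) - (\<Sum>E\<in>F0. c0 E * P E)\<bar> \<le> \<delta> + 1" using rep_close[OF fld P _ r0] by blast
    then show "y \<le> (\<Sum>E\<in>F0. c0 E * P E) + 1" using y by linarith
  qed
  define r0 where "r0 = Sup L"
  have key: "\<bar>(\<Sum>E\<in>F. c E * P E) - r0\<bar> \<le> \<delta>" if r: "apx_rep \<Omega> A f F c \<delta>" for F c \<delta>
  proof -
    have "(\<Sum>E\<in>F. c E * P E) - \<delta> \<in> L" using r unfolding L_def by blast
    then have lo: "(\<Sum>E\<in>F. c E * P E) - \<delta> \<le> r0" unfolding r0_def using bdd by (rule cSup_upper)
    have "r0 \<le> (\<Sum>E\<in>F. c E * P E) + \<delta>" unfolding r0_def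
    proof (rule cSup_least[OF ne])
      fix y assume "y \<in> L"
      then obtain F' c' \<delta>' where "apx_rep \<Omega> A f F' c' \<delta>'" and y: "y = (\<Sum>E\<in>F'. c' E * P E) - \<delta>'" unfolding L_def by blast
      then have "\<bar>(\<Sum>E\<in>F'. c' E * P E) - (\<Sum>E\<in>F. c E * P E)\<bar> \<le> \<delta>' + \<delta>" using rep_close[OF fld P _ r] by blast
      then show "y \<le> (\<Sum>E\<in>F. c E * P E) + \<delta>" using y by linarith
    qed
    then show ?thesis using lo by linarith
  qed
  have "fa_integral \<Omega> A P f = r0"
    unfolding fa_integral_def
  proof (rule the_equality)
    show "\<forall>\<epsilon>>0. \<exists>\<delta>>0. \<forall>F c. finite F \<and> F \<subseteq> A \<and> (\<forall>x\<in>\<Omega>. \<bar>f x - (\<Sum>E\<in>F. c E * indicator E x)\<bar> < \<delta>) \<longrightarrow>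
       \<bar>(\<Sum>E\<in>F. c E * P E) - r0\<bar> < \<epsilon>"
    proof (intro allI impI)
      fix \<epsilon> :: real assume e: "\<epsilon> > 0"
      show "\<exists>\<delta>>0. \<forall>F c. finite F \<and> F \<subseteq> A \<and> (\<forall>x\<in>\<Omega>. \<bar>f x - (\<Sum>E\<in>F. c E * indicator E x)\<bar> < \<delta>) \<longrightarrow>
       \<bar>(\<Sum>E\<in>F. c E * P E) - r0\<bar> < \<epsilon>"
      proof (intro exI[of _ "\<epsilon>/2"] conjI allI impI)
        fix F c assume "finite F \<and> F \<subseteq> A \<and> (\<forall>x\<in>\<Omega>. \<bar>f x - (\<Sum>E\<in>F. c E * indicator E x)\<bar> < \<epsilon>/2)"
        then have "apx_rep \<Omega> A f F c (\<epsilon>/2)" unfolding apx_rep_def by blast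
        then show "\<bar>(\<Sum>E\<in>F. c E * P E) - r0\<bar> < \<epsilon>" using key e by fastforce
      qed (use e in auto)
    qed
  next
    fix r assume hr: "\<forall>\<epsilon>>0. \<exists>\<delta>>0. \<forall>F c. finite F \<and> F \<subseteq> A \<and> (\<forall>x\<in>\<Omega>. \<bar>f x - (\<Sum>E\<in>F. c E * indicator E x)\<bar> < \<delta>) \<longrightarrow>
       \<bar>(\<Sum>E\<in>F. c E * P E) - r\<bar> < \<epsilon>"
    show "r = r0"
    proof (rule ccontr)
      assume ne: "r \<noteq> r0"
      define \<epsilon> where "\<epsilon> = \<bar>r - r0\<bar> / 2"
      have e: "\<epsilon> > 0" using ne by (simp add: \<epsilon>_def)
      obtain \<delta> where d: "\<delta> > 0" and hd: "\<forall>F c. finite F \<and> F \<subseteq> A \<and> (\<forall>x\<in>\<Omega>. \<bar>f x - (\<Sum>E\<in>F. c E * indicator E x)\<bar> < \<delta>) \<longrightarrow>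
       \<bar>(\<Sum>E\<in>F. c E * P E) - r\<bar> < \<epsilon>" using hr e by blast
      obtain F c where rc: "apx_rep \<Omega> A f F c (min \<delta> \<epsilon>)" using Bfun_rep[OF f, of "min \<delta> \<epsilon>"] d e by auto
      have "apx_rep \<Omega> A f F c \<delta>" using rc by (auto simp: apx_rep_def)
      then have 1: "\<bar>(\<Sum>E\<in>F. c E * P E) - r\<bar> < \<epsilon>" using hd by (auto simp: apx_rep_def)
      have 2: "\<bar>(\<Sum>E\<in>F. c E * P E) - r0\<bar> \<le> \<epsilon>" using key[OF rc] by linarith
      show False using aux_contra[OF 1 2 \<epsilon>_def] .
    qed
  qed
  then show "apx_rep \<Omega> A f F c \<delta> \<Longrightarrow> \<bar>(\<Sum>E\<in>F. c E * P E) - fa_integral \<Omega> A P f\<bar> \<le> \<delta>" using key by simp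
qed

lemma indicator_Bfun: "G \<in> A \<Longrightarrow> indicator G \<in> Bfun \<Omega> A"
  unfolding Bfun_def mem_Collect_eq
proof (intro allI impI)
  fix e :: real assume "e > 0" "G \<in> A"
  then show "\<exists>F c. finite F \<and> F \<subseteq> A \<and> (\<forall>x\<in>\<Omega>. \<bar>indicator G x - (\<Sum>E\<in>F. c E * indicator E x)\<bar> < e)"
    by (intro exI[of _ "{G}"] exI[of _ "\<lambda>_. 1"]) auto
qed

lemma fa_indicator:
  assumes fld: "is_field \<Omega> A" and P: "P \<in> pba \<Omega> A" and G: "G \<in> A"
  shows "fa_integral \<Omega> A P (indicator G) = P G"
proof -
  have "\<bar>(\<Sum>E\<in>{G}. (\<lambda>_. 1) E * P E) - fa_integral \<Omega> A P (indicator G)\<bar> \<le> \<delta>" if "\<delta> > 0" for \<delta> :: real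
    by (rule fa_char[OF fld P indicator_Bfun[OF G]]) (use that G in \<open>auto simp: apx_rep_def\<close>)
  then have "\<bar>P G - fa_integral \<Omega> A P (indicator G)\<bar> \<le> \<delta>" if "\<delta> > 0" for \<delta> :: real using that by simp
  then show ?thesis
    by (metis abs_le_zero_iff dense_le eq_iff_diff_eq_0 not_less)
qed



definition apx :: "'a set \<Rightarrow> 'a set set \<Rightarrow> ('i \<Rightarrow> 'a \<Rightarrow> 'a set \<Rightarrow> real) \<Rightarrow> 'i \<Rightarrow> ('a set \<Rightarrow> real) \<Rightarrow> bool" where
  "apx \<Omega> A t i P \<longleftrightarrow> (\<forall>Gs \<epsilon>. finite Gs \<and> Gs \<subseteq> A \<and> \<epsilon> > 0 \<longrightarrow>
      (\<exists>R\<in>type_conv \<Omega> (t i). \<forall>G\<in>Gs. \<bar>R G - P G\<bar> < \<epsilon>))"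

abbreviation subb :: "'a set \<Rightarrow> 'a set set \<Rightarrow> ('a set \<Rightarrow> real) set set" where
  "subb \<Omega> A \<equiv> {{\<mu> \<in> bfa \<Omega> A. fa_integral \<Omega> A \<mu> f \<in> U} | f U. f \<in> Bfun \<Omega> A \<and> open U}"

lemma pba_bfa: "is_field \<Omega> A \<Longrightarrow> P \<in> pba \<Omega> A \<Longrightarrow> P \<in> bfa \<Omega> A"
  unfolding bfa_def
proof (intro CollectI conjI)
  assume f: "is_field \<Omega> A" and P: "P \<in> pba \<Omega> A"
  show "\<forall>E\<in>A. \<forall>F\<in>A. E \<inter> F = {} \<longrightarrow> P (E \<union> F) = P E + P F" using P by (simp add: pba_def)
  show "\<exists>c. \<forall>E\<in>A. \<bar>P E\<bar> \<le> c"
    by (rule exI[of _ 1]) (use pba_nonneg[OF P] pba_le1[OF f P] in auto)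
qed

lemma zero_Bfun: "(\<lambda>_. 0) \<in> Bfun \<Omega> A"
  unfolding Bfun_def by (auto intro!: exI[of _ "{}"])

lemma bfa_in_subb: "bfa \<Omega> A \<in> subb \<Omega> A"
proof -
  have "bfa \<Omega> A = {\<mu> \<in> bfa \<Omega> A. fa_integral \<Omega> A \<mu> (\<lambda>_. 0) \<in> UNIV}" by simp
  then show ?thesis using zero_Bfun[of \<Omega> A] by blast
qed

lemma topspace_ws: "topspace (weak_star \<Omega> A) = bfa \<Omega> A"
  unfolding weak_star_def topspace_subtopology topology_generated_by_topspace
  using bfa_in_subb[of \<Omega> A] by blast

lemma conv_pba:
  assumes ts: "type_space \<Omega> A N M t" and i: "i \<in> N"
  shows "type_conv \<Omega> (t i) \<subseteq> pba \<Omega> A"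
proof
  fix R assume "R \<in> type_conv \<Omega> (t i)"
  then obtain W a where W: "finite W" "W \<subseteq> \<Omega>" "\<forall>\<omega>\<in>W. 0 \<le> a \<omega>" "(\<Sum>\<omega>\<in>W. a \<omega>) = 1"
    and R: "R = (\<lambda>E. \<Sum>\<omega>\<in>W. a \<omega> * t i \<omega> E)" unfolding type_conv_def by blast
  have tp: "\<forall>\<omega>\<in>\<Omega>. t i \<omega> \<in> pba \<Omega> A" using ts i by (simp add: type_space_def)
  show "R \<in> pba \<Omega> A" unfolding pba_def
  proof (intro CollectI conjI ballI impI)
    fix E F assume "E \<in> A" "F \<in> A" "E \<inter> F = {}"
    then have "\<forall>\<omega>\<in>W. t i \<omega> (E \<union> F) = t i \<omega> E + t i \<omega> F" using tp W(2) pba_add by blast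
    then show "R (E \<union> F) = R E + R F" unfolding R by (simp add: distrib_left sum.distrib)
  next
    fix E assume "E \<in> A"
    then have "\<forall>\<omega>\<in>W. 0 \<le> t i \<omega> E" using tp W(2) pba_nonneg by blast
    then show "0 \<le> R E" unfolding R using W(3) by (simp add: sum_nonneg)
  next
    have "\<forall>\<omega>\<in>W. t i \<omega> \<Omega> = 1" using tp W(2) pba_top by blast
    then show "R \<Omega> = 1" unfolding R using W(4) by simp
  qed
qed

lemma sum_test_bound:
  fixes c :: "'b \<Rightarrow> real"
  assumes "finite F" "\<forall>E\<in>F. \<bar>x E - y E\<bar> < \<epsilon>" "\<epsilon> > 0"
  shows "\<bar>(\<Sum>E\<in>F. c E * x E) - (\<Sum>E\<in>F. c E * y E)\<bar> \<le> (\<Sum>E\<in>F. \<bar>c E\<bar>) * \<epsilon>"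
proof -
  have "\<bar>(\<Sum>E\<in>F. c E * x E) - (\<Sum>E\<in>F. c E * y E)\<bar> = \<bar>\<Sum>E\<in>F. c E * (x E - y E)\<bar>"
    by (simp add: sum_subtractf right_diff_distrib)
  also have "\<dots> \<le> (\<Sum>E\<in>F. \<bar>c E * (x E - y E)\<bar>)" by (rule sum_abs)
  also have "\<dots> \<le> (\<Sum>E\<in>F. \<bar>c E\<bar> * \<epsilon>)"
  proof (rule sum_mono)
    fix E assume "E \<in> F"
    then have "\<bar>x E - y E\<bar> \<le> \<epsilon>" using assms(2) by fastforce
    then show "\<bar>c E * (x E - y E)\<bar> \<le> \<bar>c E\<bar> * \<epsilon>" by (simp add: abs_mult mult_left_mono)
  qed
  also have "\<dots> = (\<Sum>E\<in>F. \<bar>c E\<bar>) * \<epsilon>" by (simp add: sum_distrib_right)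
  finally show ?thesis .
qed

lemma nbhd_lemma:
  assumes fld: "is_field \<Omega> A"
  shows "generate_topology_on (subb \<Omega> A) W \<Longrightarrow> Q \<in> W \<Longrightarrow> Q \<in> pba \<Omega> A \<Longrightarrow>
    \<exists>Gs \<epsilon>. finite Gs \<and> Gs \<subseteq> A \<and> \<epsilon> > 0 \<and> (\<forall>\<mu>\<in>pba \<Omega> A. (\<forall>G\<in>Gs. \<bar>\<mu> G - Q G\<bar> < \<epsilon>) \<longrightarrow> \<mu> \<in> W)"
proof (induction rule: generate_topology_on.induct)
  case Empty
  then show ?case by simp
next
  case (Int a b)
  obtain Gs1 e1 where 1: "finite Gs1" "Gs1 \<subseteq> A" "e1 > 0" "\<forall>\<mu>\<in>pba \<Omega> A. (\<forall>G\<in>Gs1. \<bar>\<mu> G - Q G\<bar> < e1) \<longrightarrow> \<mu> \<in> a"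
    using Int by auto
  obtain Gs2 e2 where 2: "finite Gs2" "Gs2 \<subseteq> A" "e2 > 0" "\<forall>\<mu>\<in>pba \<Omega> A. (\<forall>G\<in>Gs2. \<bar>\<mu> G - Q G\<bar> < e2) \<longrightarrow> \<mu> \<in> b"
    using Int by auto
  show ?case
    by (rule exI[of _ "Gs1 \<union> Gs2"], rule exI[of _ "min e1 e2"]) (use 1 2 in auto)
next
  case (UN K)
  then obtain k where k: "k \<in> K" "Q \<in> k" by auto
  obtain Gs e where "finite Gs" "Gs \<subseteq> A" "e > 0" and h: "\<forall>\<mu>\<in>pba \<Omega> A. (\<forall>G\<in>Gs. \<bar>\<mu> G - Q G\<bar> < e) \<longrightarrow> \<mu> \<in> k"
    using UN.IH[OF k UN.prems(2)] by blast
  have "\<forall>\<mu>\<in>pba \<Omega> A. (\<forall>G\<in>Gs. \<bar>\<mu> G - Q G\<bar> < e) \<longrightarrow> \<mu> \<in> \<Union>K" using h k(1) by blast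
  then show ?case using \<open>finite Gs\<close> \<open>Gs \<subseteq> A\<close> \<open>e > 0\<close> by blast
next
  case (Basis s)
  then obtain f U where s: "s = {\<mu> \<in> bfa \<Omega> A. fa_integral \<Omega> A \<mu> f \<in> U}" and f: "f \<in> Bfun \<Omega> A" and U: "open U"
    by blast
  have QU: "fa_integral \<Omega> A Q f \<in> U" using Basis s by auto
  obtain r where r: "r > 0" "ball (fa_integral \<Omega> A Q f) r \<subseteq> U" using U QU open_contains_ball by blast
  define \<delta> where "\<delta> = r / 3"
  have d: "\<delta> > 0" using r by (simp add: \<delta>_def)
  obtain F c where rep: "apx_rep \<Omega> A f F c \<delta>" using Bfun_rep[OF f d] by blast
  have F: "finite F" "F \<subseteq> A" using rep by (auto simp: apx_rep_def)
  define C where "C = (\<Sum>E\<in>F. \<bar>c E\<bar>)"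
  have C: "C \<ge> 0" unfolding C_def by (simp add: sum_nonneg)
  define \<epsilon> where "\<epsilon> = \<delta> / (C + 1)"
  have e: "\<epsilon> > 0" using d C by (simp add: \<epsilon>_def)
  have Ce: "C * \<epsilon> < \<delta>"
  proof -
    have "C * \<epsilon> = \<delta> * (C / (C + 1))" by (simp add: \<epsilon>_def)
    also have "\<dots> < \<delta> * 1" using d C by (intro mult_strict_left_mono) auto
    finally show ?thesis by simp
  qed
  show ?case
  proof (intro exI[of _ F] exI[of _ \<epsilon>] conjI F e ballI impI)
    fix \<mu> assume mu: "\<mu> \<in> pba \<Omega> A" and tests: "\<forall>G\<in>F. \<bar>\<mu> G - Q G\<bar> < \<epsilon>"
    have a1: "\<bar>(\<Sum>E\<in>F. c E * \<mu> E) - fa_integral \<Omega> A \<mu> f\<bar> \<le> \<delta>" using fa_char[OF fld mu f rep] .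
    have a2: "\<bar>(\<Sum>E\<in>F. c E * Q E) - fa_integral \<Omega> A Q f\<bar> \<le> \<delta>" using fa_char[OF fld Basis(3) f rep] .
    have a3: "\<bar>(\<Sum>E\<in>F. c E * \<mu> E) - (\<Sum>E\<in>F. c E * Q E)\<bar> \<le> C * \<epsilon>"
      unfolding C_def by (rule sum_test_bound[OF F(1) tests e])
    have "dist (fa_integral \<Omega> A Q f) (fa_integral \<Omega> A \<mu> f) < r"
      using a1 a2 a3 Ce unfolding dist_real_def \<delta>_def by linarith
    then have "fa_integral \<Omega> A \<mu> f \<in> U" using r by auto
    then show "\<mu> \<in> s" using s pba_bfa[OF fld mu] by auto
  qed
qed

lemma apx_closure:
  assumes ts: "type_space \<Omega> A N M t" and i: "i \<in> N" and P: "P \<in> pba \<Omega> A" and ap: "apx \<Omega> A t i P"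
  shows "P \<in> Pi_set \<Omega> A t i"
proof -
  have fld: "is_field \<Omega> A" using ts by (simp add: type_space_def)
  show ?thesis
    unfolding Pi_set_def in_closure_of topspace_ws
  proof (intro conjI allI impI)
    show "P \<in> bfa \<Omega> A" using pba_bfa[OF fld P] .
    fix T assume T: "P \<in> T \<and> openin (weak_star \<Omega> A) T"
    then obtain T0 where T0: "openin (topology_generated_by (subb \<Omega> A)) T0" "T = T0 \<inter> bfa \<Omega> A"
      unfolding weak_star_def openin_subtopology by blast
    have g: "generate_topology_on (subb \<Omega> A) T0" using T0(1) openin_topology_generated_by_iff by blast
    obtain Gs \<epsilon> where G: "finite Gs" "Gs \<subseteq> A" "\<epsilon> > 0" and hG: "\<forall>\<mu>\<in>pba \<Omega> A. (\<forall>G\<in>Gs. \<bar>\<mu> G - P G\<bar> < \<epsilon>) \<longrightarrow> \<mu> \<in> T0"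
      using nbhd_lemma[OF fld g _ P] T T0 by blast
    obtain R where R: "R \<in> type_conv \<Omega> (t i)" "\<forall>G\<in>Gs. \<bar>R G - P G\<bar> < \<epsilon>" using ap G unfolding apx_def by blast
    have "R \<in> pba \<Omega> A" using conv_pba[OF ts i] R(1) by blast
    then have "R \<in> T" using hG R(2) T0(2) pba_bfa[OF fld] by blast
    then show "\<exists>y. y \<in> type_conv \<Omega> (t i) \<and> y \<in> T" using R(1) by blast
  qed
qed

lemma gen_tests:
  assumes fld: "is_field \<Omega> A"
  shows "finite Gs \<Longrightarrow> Gs \<subseteq> A \<Longrightarrow>
    generate_topology_on (subb \<Omega> A) {\<mu> \<in> bfa \<Omega> A. \<forall>G\<in>Gs. fa_integral \<Omega> A \<mu> (indicator G) \<in> ball (P G) \<epsilon>}"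
proof (induction Gs rule: finite_induct)
  case empty
  then show ?case using bfa_in_subb[of \<Omega> A] by (simp add: generate_topology_on.Basis)
next
  case (insert G Gs)
  have "{\<mu> \<in> bfa \<Omega> A. fa_integral \<Omega> A \<mu> (indicator G) \<in> ball (P G) \<epsilon>} \<in> subb \<Omega> A"
    using indicator_Bfun[of G A \<Omega>] insert(4) by blast
  then have b: "generate_topology_on (subb \<Omega> A) {\<mu> \<in> bfa \<Omega> A. fa_integral \<Omega> A \<mu> (indicator G) \<in> ball (P G) \<epsilon>}"
    by (rule generate_topology_on.Basis)
  have eq: "{\<mu> \<in> bfa \<Omega> A. \<forall>G'\<in>insert G Gs. fa_integral \<Omega> A \<mu> (indicator G') \<in> ball (P G') \<epsilon>} =
    {\<mu> \<in> bfa \<Omega> A. fa_integral \<Omega> A \<mu> (indicator G) \<in> ball (P G) \<epsilon>} \<inter>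
    {\<mu> \<in> bfa \<Omega> A. \<forall>G\<in>Gs. fa_integral \<Omega> A \<mu> (indicator G) \<in> ball (P G) \<epsilon>}" by auto
  show ?case unfolding eq using insert b by (intro generate_topology_on.Int) auto
qed

lemma closure_apx:
  assumes ts: "type_space \<Omega> A N M t" and i: "i \<in> N" and P: "P \<in> pba \<Omega> A" and cl: "P \<in> Pi_set \<Omega> A t i"
  shows "apx \<Omega> A t i P"
  unfolding apx_def
proof (intro allI impI)
  have fld: "is_field \<Omega> A" using ts by (simp add: type_space_def)
  fix Gs and \<epsilon> :: real assume G: "finite Gs \<and> Gs \<subseteq> A \<and> \<epsilon> > 0"
  define T where "T = {\<mu> \<in> bfa \<Omega> A. \<forall>G\<in>Gs. fa_integral \<Omega> A \<mu> (indicator G) \<in> ball (P G) \<epsilon>}"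
  have g: "generate_topology_on (subb \<Omega> A) T" unfolding T_def using gen_tests[OF fld] G by blast
  have "openin (weak_star \<Omega> A) T"
    unfolding weak_star_def openin_subtopology
    by (rule exI[of _ T]) (use g openin_topology_generated_by_iff T_def in auto)
  moreover have "P \<in> T" unfolding T_def using pba_bfa[OF fld P] fa_indicator[OF fld P] G G by auto
  ultimately obtain R where R: "R \<in> type_conv \<Omega> (t i)" "R \<in> T"
    using cl unfolding Pi_set_def in_closure_of by blast
  have Rp: "R \<in> pba \<Omega> A" using conv_pba[OF ts i] R(1) by blast
  have "\<forall>G\<in>Gs. \<bar>R G - P G\<bar> < \<epsilon>"
  proof
    fix G assume "G \<in> Gs"
    then have "fa_integral \<Omega> A R (indicator G) \<in> ball (P G) \<epsilon>" "G \<in> A" using R(2) G unfolding T_def by auto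
    then show "\<bar>R G - P G\<bar> < \<epsilon>" using fa_indicator[OF fld Rp] by (auto simp: dist_real_def abs_minus_commute)
  qed
  then show "\<exists>R\<in>type_conv \<Omega> (t i). \<forall>G\<in>Gs. \<bar>R G - P G\<bar> < \<epsilon>" using R(1) by blast
qed



lemma ts_field: "type_space \<Omega> A N M t \<Longrightarrow> is_field \<Omega> A" by (simp add: type_space_def)
lemma ts_Mfield: "type_space \<Omega> A N M t \<Longrightarrow> i \<in> N \<Longrightarrow> is_field \<Omega> (M i)" by (simp add: type_space_def)
lemma ts_MA: "type_space \<Omega> A N M t \<Longrightarrow> i \<in> N \<Longrightarrow> M i \<subseteq> A" by (simp add: type_space_def)
lemma ts_pba: "type_space \<Omega> A N M t \<Longrightarrow> i \<in> N \<Longrightarrow> \<omega> \<in> \<Omega> \<Longrightarrow> t i \<omega> \<in> pba \<Omega> A" by (simp add: type_space_def)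
lemma ts_Bfun: "type_space \<Omega> A N M t \<Longrightarrow> i \<in> N \<Longrightarrow> E \<in> A \<Longrightarrow> (\<lambda>\<omega>. t i \<omega> E) \<in> Bfun \<Omega> (M i)" by (simp add: type_space_def)
lemma ts_one: "type_space \<Omega> A N M t \<Longrightarrow> i \<in> N \<Longrightarrow> F \<in> M i \<Longrightarrow> \<omega> \<in> F \<Longrightarrow> t i \<omega> F = 1" by (simp add: type_space_def)

lemma ts_zero:
  assumes ts: "type_space \<Omega> A N M t" and i: "i \<in> N" and F: "F \<in> M i" and w: "\<omega> \<in> \<Omega>" "\<omega> \<notin> F"
  shows "t i \<omega> F = 0"
proof -
  have "\<Omega> - F \<in> M i" using field_compl[OF ts_Mfield[OF ts i] F] .
  then have "t i \<omega> (\<Omega> - F) = 1" using ts_one[OF ts i] w by blast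
  moreover have "t i \<omega> (\<Omega> - F) = 1 - t i \<omega> F"
    using pba_compl[OF ts_field[OF ts] ts_pba[OF ts i w(1)]] F ts_MA[OF ts i] by blast
  ultimately show ?thesis by simp
qed

lemma level_set:
  fixes c :: "'a set \<Rightarrow> real" and X :: "real set"
  assumes fld: "is_field \<Omega> M"
  shows "finite Fs \<Longrightarrow> Fs \<subseteq> M \<Longrightarrow> {\<omega>\<in>\<Omega>. (\<Sum>F\<in>Fs. c F * indicator F \<omega>) \<in> X} \<in> M"
proof (induction Fs arbitrary: X rule: finite_induct)
  case empty
  show ?case
  proof (cases "(0::real) \<in> X")
    case True
    then have "{\<omega>\<in>\<Omega>. (\<Sum>F\<in>{}. c F * indicator F \<omega>) \<in> X} = \<Omega>" by auto
    then show ?thesis using field_top[OF fld] by simp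
  next
    case False
    then have "{\<omega>\<in>\<Omega>. (\<Sum>F\<in>{}. c F * indicator F \<omega>) \<in> X} = {}" by auto
    then show ?thesis using field_empty[OF fld] by metis
  qed
next
  case (insert F0 Fs)
  have F0: "F0 \<in> M" and Fs: "Fs \<subseteq> M" using insert by auto
  let ?h = "\<lambda>\<omega>. (\<Sum>F\<in>Fs. c F * indicator F \<omega>)"
  have s1: "{\<omega>\<in>\<Omega>. ?h \<omega> \<in> {y. c F0 + y \<in> X}} \<in> M" using insert(3)[OF Fs] .
  have s2: "{\<omega>\<in>\<Omega>. ?h \<omega> \<in> X} \<in> M" using insert(3)[OF Fs] .
  have eq: "{\<omega>\<in>\<Omega>. (\<Sum>F\<in>insert F0 Fs. c F * indicator F \<omega>) \<in> X} =
     (F0 \<inter> {\<omega>\<in>\<Omega>. ?h \<omega> \<in> {y. c F0 + y \<in> X}}) \<union> ((\<Omega> - F0) \<inter> {\<omega>\<in>\<Omega>. ?h \<omega> \<in> X})"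
    (is "?L = ?R")
  proof -
    have "\<And>\<omega>. (\<Sum>F\<in>insert F0 Fs. c F * indicator F \<omega>) = c F0 * indicator F0 \<omega> + ?h \<omega>"
      by (rule sum.insert[OF insert(1,2)])
    then show ?thesis using field_sub[OF fld F0] by (auto simp: indicator_def)
  qed
  show ?case unfolding eq
    by (intro field_Un[OF fld] field_Int[OF fld] F0 s1 s2 field_compl[OF fld])
qed

lemma U_lemma:
  assumes ts: "type_space \<Omega> A N M t" and i: "i \<in> N" and P: "P \<in> pba \<Omega> A" and ap: "apx \<Omega> A t i P"
    and E: "E \<in> A" and E1: "\<forall>\<omega>\<in>E. t i \<omega> E = 1" and d: "\<delta> > 0"
  shows "\<exists>U\<in>M i. E \<subseteq> U \<and> P (U - E) \<le> \<delta>"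
proof -
  have fld: "is_field \<Omega> A" using ts_field[OF ts] .
  have fldM: "is_field \<Omega> (M i)" using ts_Mfield[OF ts i] .
  have MA: "M i \<subseteq> A" using ts_MA[OF ts i] .
  define d' where "d' = \<delta> / 4"
  have d': "d' > 0" using d by (simp add: d'_def)
  obtain Fs c where Fs: "finite Fs" "Fs \<subseteq> M i"
    and hf: "\<forall>x\<in>\<Omega>. \<bar>t i x E - (\<Sum>F\<in>Fs. c F * indicator F x)\<bar> < d'"
    using ts_Bfun[OF ts i E] d' unfolding Bfun_def by blast
  define U where "U = {\<omega>\<in>\<Omega>. (\<Sum>F\<in>Fs. c F * indicator F \<omega>) \<in> {y. y > 1 - d'}}"
  have UM: "U \<in> M i" unfolding U_def by (rule level_set[OF fldM Fs])
  have UA: "U \<in> A" using UM MA by blast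
  have EO: "E \<subseteq> \<Omega>" using field_sub[OF fld E] .
  have EU: "E \<subseteq> U"
  proof
    fix \<omega> assume w: "\<omega> \<in> E"
    then have "\<bar>1 - (\<Sum>F\<in>Fs. c F * indicator F \<omega>)\<bar> < d'" using hf E1 EO by fastforce
    then show "\<omega> \<in> U" unfolding U_def using w EO by auto
  qed
  have UEA: "U - E \<in> A" using field_diff[OF fld UA E] .
  have each: "t i \<omega> (U - E) \<le> 2 * d'" if w: "\<omega> \<in> \<Omega>" for \<omega>
  proof -
    have tp: "t i \<omega> \<in> pba \<Omega> A" using ts_pba[OF ts i w] .
    show ?thesis
    proof (cases "\<omega> \<in> U")
      case True
      have "t i \<omega> (U - E) \<le> t i \<omega> (\<Omega> - E)"
        by (rule pba_mono[OF fld tp UEA field_compl[OF fld E]]) (use UA field_sub[OF fld] in blast)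
      also have "\<dots> = 1 - t i \<omega> E" using pba_compl[OF fld tp E] .
      finally have 1: "t i \<omega> (U - E) \<le> 1 - t i \<omega> E" .
      have "(\<Sum>F\<in>Fs. c F * indicator F \<omega>) > 1 - d'" using True unfolding U_def by auto
      moreover have "\<bar>t i \<omega> E - (\<Sum>F\<in>Fs. c F * indicator F \<omega>)\<bar> < d'" using hf w by blast
      ultimately show ?thesis using 1 by linarith
    next
      case False
      have "t i \<omega> (U - E) \<le> t i \<omega> U" by (rule pba_mono[OF fld tp UEA UA]) auto
      also have "\<dots> = 0" using ts_zero[OF ts i UM w False] .
      finally show ?thesis using d' by simp
    qed
  qed
  have convb: "R (U - E) \<le> 2 * d'" if R: "R \<in> type_conv \<Omega> (t i)" for R
  proof -
    obtain W a where W: "finite W" "W \<subseteq> \<Omega>" "\<forall>\<omega>\<in>W. 0 \<le> a \<omega>" "(\<Sum>\<omega>\<in>W. a \<omega>) = 1"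
      and R: "R = (\<lambda>E. \<Sum>\<omega>\<in>W. a \<omega> * t i \<omega> E)" using R unfolding type_conv_def by blast
    have "R (U - E) = (\<Sum>\<omega>\<in>W. a \<omega> * t i \<omega> (U - E))" using R by simp
    also have "\<dots> \<le> (\<Sum>\<omega>\<in>W. a \<omega> * (2 * d'))"
      by (rule sum_mono) (use W each in \<open>auto intro: mult_left_mono\<close>)
    also have "\<dots> = 2 * d'" using W(4) by (simp add: sum_distrib_right[symmetric])
    finally show ?thesis .
  qed
  obtain R where R: "R \<in> type_conv \<Omega> (t i)" "\<forall>G\<in>{U - E}. \<bar>R G - P G\<bar> < \<delta> / 2"
    using ap UEA d unfolding apx_def by (metis empty_subsetI finite.emptyI finite_insert insert_subset half_gt_zero)
  have "P (U - E) \<le> \<delta>" using R(2) convb[OF R(1)] d'_def by auto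
  then show ?thesis using UM EU by blast
qed

lemma ratio_bound:
  fixes x y a p \<eta> :: real
  assumes p: "p > 0" and xa: "\<bar>x - a\<bar> \<le> \<eta>" and yp: "\<bar>y - p\<bar> \<le> \<eta>" and a: "0 \<le> a" "a \<le> p" and e: "\<eta> \<le> p / 2"
  shows "\<bar>x / y - a / p\<bar> \<le> 4 * \<eta> / p"
proof -
  have y: "y \<ge> p / 2" using yp e by linarith
  have ypos: "y > 0" using y p by linarith
  have N1: "x / y - a / p = (p * (x - a) - a * (y - p)) / (y * p)"
    using ypos p by (simp add: field_simps)
  have N2: "\<bar>p * (x - a) - a * (y - p)\<bar> \<le> 2 * p * \<eta>"
  proof -
    have "\<bar>p * (x - a)\<bar> \<le> p * \<eta>" using p xa by (simp add: abs_mult)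
    moreover have "\<bar>a * (y - p)\<bar> \<le> p * \<eta>"
    proof -
      have "\<bar>a * (y - p)\<bar> = a * \<bar>y - p\<bar>" using a by (simp add: abs_mult)
      also have "\<dots> \<le> p * \<eta>" using a yp by (intro mult_mono) auto
      finally show ?thesis .
    qed
    ultimately show ?thesis by linarith
  qed
  have "\<bar>x / y - a / p\<bar> = \<bar>p * (x - a) - a * (y - p)\<bar> / (y * p)"
    using N1 ypos p by (simp add: abs_div)
  also have "\<dots> \<le> 2 * p * \<eta> / (y * p)"
    by (rule divide_right_mono) (use N2 ypos p in auto)
  also have "\<dots> = 2 * \<eta> / y" using p by simp
  also have "\<dots> \<le> 4 * \<eta> / p"
  proof -
    have eta: "\<eta> \<ge> 0" using xa by linarith
    have "2 * \<eta> / y \<le> 2 * \<eta> / (p / 2)" using y p eta by (intro divide_left_mono) auto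
    then show ?thesis by simp
  qed
  finally show ?thesis .
qed



lemma cond_lemma:
  assumes ts: "type_space \<Omega> A N M t" and i: "i \<in> N" and P: "P \<in> pba \<Omega> A" and ap: "apx \<Omega> A t i P"
    and E: "E \<in> A" and E1: "\<forall>\<omega>\<in>E. t i \<omega> E = 1" and pE: "P E > 0"
  shows "apx \<Omega> A t i (\<lambda>X. if X \<in> A then P (X \<inter> E) / P E else 0)"
  unfolding apx_def
proof (intro allI impI)
  fix Gs and \<epsilon> :: real assume G: "finite Gs \<and> Gs \<subseteq> A \<and> \<epsilon> > 0"
  have fld: "is_field \<Omega> A" using ts_field[OF ts] .
  have MA: "M i \<subseteq> A" using ts_MA[OF ts i] .
  define p where "p = P E"
  have p: "p > 0" using pE p_def by simp
  define \<kappa> where "\<kappa> = min (p / 4) (p * \<epsilon> / 16)"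
  have k: "\<kappa> > 0" using p G by (simp add: \<kappa>_def)
  obtain U where UM: "U \<in> M i" and EU: "E \<subseteq> U" and PUE: "P (U - E) \<le> \<kappa>"
    using U_lemma[OF ts i P ap E E1 k] by blast
  have UA: "U \<in> A" using UM MA by blast
  have UO: "U \<subseteq> \<Omega>" using field_sub[OF fld UA] .
  define Gs' where "Gs' = insert U ((\<lambda>G. G \<inter> U) ` Gs)"
  have G': "finite Gs'" "Gs' \<subseteq> A" unfolding Gs'_def using G UA field_Int[OF fld] by auto
  obtain R where R: "R \<in> type_conv \<Omega> (t i)" and RG: "\<forall>G\<in>Gs'. \<bar>R G - P G\<bar> < \<kappa>"
    using ap G' k unfolding apx_def by blast
  obtain W a where W: "finite W" "W \<noteq> {}" "W \<subseteq> \<Omega>" "\<forall>\<omega>\<in>W. 0 \<le> a \<omega>" "(\<Sum>\<omega>\<in>W. a \<omega>) = 1"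
    and Rd: "R = (\<lambda>E. \<Sum>\<omega>\<in>W. a \<omega> * t i \<omega> E)" using R unfolding type_conv_def by blast
  have PU: "P U = p + P (U - E)"
  proof -
    have "P U = P (U \<inter> E) + P (U - E)" using pba_split[OF fld P UA E] .
    moreover have "U \<inter> E = E" using EU by auto
    ultimately show ?thesis using p_def by simp
  qed
  have PUE0: "0 \<le> P (U - E)" using pba_nonneg[OF P field_diff[OF fld UA E]] .
  define y where "y = R U"
  have yU: "\<bar>y - P U\<bar> < \<kappa>" using RG unfolding y_def Gs'_def by auto
  have yp: "\<bar>y - p\<bar> \<le> 2 * \<kappa>" using yU PU PUE PUE0 by linarith
  have kp: "2 * \<kappa> \<le> p / 2" unfolding \<kappa>_def by linarith
  have ypos: "y > 0" using yp kp p by linarith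
  have tU: "t i \<omega> U = (if \<omega> \<in> U then 1 else 0)" if "\<omega> \<in> W" for \<omega>
    using ts_one[OF ts i UM] ts_zero[OF ts i UM] that W(3) by auto
  have tGU: "t i \<omega> (G \<inter> U) = (if \<omega> \<in> U then t i \<omega> G else 0)" if w: "\<omega> \<in> W" and GA: "G \<in> A" for \<omega> G
  proof -
    have wO: "\<omega> \<in> \<Omega>" using w W(3) by blast
    have tp: "t i \<omega> \<in> pba \<Omega> A" using ts_pba[OF ts i wO] .
    have GUA: "G \<inter> U \<in> A" using field_Int[OF fld GA UA] .
    show ?thesis
    proof (cases "\<omega> \<in> U")
      case True
      have "t i \<omega> G = t i \<omega> (G \<inter> U) + t i \<omega> (G - U)" using pba_split[OF fld tp GA UA] .
      moreover have "t i \<omega> (G - U) \<le> t i \<omega> (\<Omega> - U)"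
        by (rule pba_mono[OF fld tp field_diff[OF fld GA UA] field_compl[OF fld UA]]) (use field_sub[OF fld GA] in blast)
      moreover have "t i \<omega> (\<Omega> - U) = 1 - t i \<omega> U" using pba_compl[OF fld tp UA] .
      moreover have "t i \<omega> U = 1" using tU[OF w] True by simp
      moreover have "0 \<le> t i \<omega> (G - U)" using pba_nonneg[OF tp field_diff[OF fld GA UA]] .
      ultimately show ?thesis using True by simp
    next
      case False
      have "t i \<omega> (G \<inter> U) \<le> t i \<omega> U" by (rule pba_mono[OF fld tp GUA UA]) auto
      moreover have "t i \<omega> U = 0" using tU[OF w] False by simp
      moreover have "0 \<le> t i \<omega> (G \<inter> U)" using pba_nonneg[OF tp GUA] .
      ultimately show ?thesis using False by simp
    qed
  qed
  have ysum: "y = (\<Sum>\<omega>\<in>W \<inter> U. a \<omega>)"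
  proof -
    have "y = (\<Sum>\<omega>\<in>W. a \<omega> * t i \<omega> U)" unfolding y_def Rd by simp
    also have "\<dots> = (\<Sum>\<omega>\<in>W. if \<omega> \<in> U then a \<omega> else 0)" by (rule sum.cong) (auto simp: tU)
    also have "\<dots> = (\<Sum>\<omega>\<in>W \<inter> U. a \<omega>)" by (rule sum.inter_restrict[symmetric]) (use W in auto)
    finally show ?thesis .
  qed
  have RGU: "R (G \<inter> U) = (\<Sum>\<omega>\<in>W \<inter> U. a \<omega> * t i \<omega> G)" if GA: "G \<in> A" for G
  proof -
    have "R (G \<inter> U) = (\<Sum>\<omega>\<in>W. a \<omega> * t i \<omega> (G \<inter> U))" unfolding Rd by simp
    also have "\<dots> = (\<Sum>\<omega>\<in>W. if \<omega> \<in> U then a \<omega> * t i \<omega> G else 0)" by (rule sum.cong) (auto simp: tGU[OF _ GA])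
    also have "\<dots> = (\<Sum>\<omega>\<in>W \<inter> U. a \<omega> * t i \<omega> G)" by (rule sum.inter_restrict[symmetric]) (use W in auto)
    finally show ?thesis .
  qed
  define R' where "R' = (\<lambda>X. \<Sum>\<omega>\<in>W \<inter> U. (a \<omega> / y) * t i \<omega> X)"
  have WU: "W \<inter> U \<noteq> {}" using ysum ypos by auto
  have R'conv: "R' \<in> type_conv \<Omega> (t i)"
    unfolding type_conv_def mem_Collect_eq
  proof (intro exI[of _ "W \<inter> U"] exI[of _ "\<lambda>\<omega>. a \<omega> / y"] conjI)
    show "finite (W \<inter> U)" using W by simp
    show "W \<inter> U \<noteq> {}" using WU .
    show "W \<inter> U \<subseteq> \<Omega>" using W by auto
    show "\<forall>\<omega>\<in>W \<inter> U. 0 \<le> a \<omega> / y" using W ypos by auto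
    show "(\<Sum>\<omega>\<in>W \<inter> U. a \<omega> / y) = 1" using ysum ypos by (simp add: sum_divide_distrib[symmetric])
    show "R' = (\<lambda>E. \<Sum>\<omega>\<in>W \<inter> U. a \<omega> / y * t i \<omega> E)" unfolding R'_def ..
  qed
  have "\<forall>G\<in>Gs. \<bar>R' G - (if G \<in> A then P (G \<inter> E) / P E else 0)\<bar> < \<epsilon>"
  proof
    fix G assume GG: "G \<in> Gs"
    have GA: "G \<in> A" using GG G by blast
    have R'G: "R' G = R (G \<inter> U) / y"
      unfolding R'_def RGU[OF GA] by (simp add: sum_divide_distrib)
    define x where "x = R (G \<inter> U)"
    define a0 where "a0 = P (G \<inter> E)"
    have GUA: "G \<inter> U \<in> A" using field_Int[OF fld GA UA] .
    have GEA: "G \<inter> E \<in> A" using field_Int[OF fld GA E] .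
    have x1: "\<bar>x - P (G \<inter> U)\<bar> < \<kappa>" using RG GG unfolding x_def Gs'_def by auto
    have eqGE: "(G \<inter> U) \<inter> E = G \<inter> E" using EU by auto
    have "P (G \<inter> U) = P (G \<inter> E) + P ((G \<inter> U) - E)" using pba_split[OF fld P GUA E] eqGE by simp
    moreover have "P ((G \<inter> U) - E) \<le> P (U - E)"
      by (rule pba_mono[OF fld P field_diff[OF fld GUA E] field_diff[OF fld UA E]]) auto
    moreover have "0 \<le> P ((G \<inter> U) - E)" using pba_nonneg[OF P field_diff[OF fld GUA E]] .
    ultimately have xa: "\<bar>x - a0\<bar> \<le> 2 * \<kappa>" using x1 PUE unfolding a0_def by linarith
    have a0: "0 \<le> a0" "a0 \<le> p" unfolding a0_def p_def
      using pba_nonneg[OF P GEA] pba_mono[OF fld P GEA E] by auto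
    have "\<bar>x / y - a0 / p\<bar> \<le> 4 * (2 * \<kappa>) / p"
      by (rule ratio_bound[OF p xa yp a0 kp])
    also have "\<dots> \<le> 4 * (2 * (p * \<epsilon> / 16)) / p"
      using p by (intro divide_right_mono mult_left_mono) (auto simp: \<kappa>_def)
    also have "\<dots> = \<epsilon> / 2" using p by simp
    also have "\<dots> < \<epsilon>" using G by simp
    finally show "\<bar>R' G - (if G \<in> A then P (G \<inter> E) / P E else 0)\<bar> < \<epsilon>"
      using GA R'G unfolding x_def a0_def p_def by simp
  qed
  then show "\<exists>R\<in>type_conv \<Omega> (t i). \<forall>G\<in>Gs. \<bar>R G - (if G \<in> A then P (G \<inter> E) / P E else 0)\<bar> < \<epsilon>"
    using R'conv by blast
qed



abbreviation PX :: "('a set \<Rightarrow> real) topology" where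
  "PX \<equiv> product_topology (\<lambda>_. euclideanreal) UNIV"

lemma PX_top [simp]: "topspace PX = UNIV"
  by simp

lemma coord_open: "open V \<Longrightarrow> openin PX {Q. Q Y \<in> V}"
proof -
  assume V: "open V"
  have "continuous_map PX euclideanreal (\<lambda>Q. Q Y)"
    by (rule continuous_map_product_projection) simp
  then have "openin PX {Q \<in> topspace PX. Q Y \<in> V}" using V by (intro openin_continuous_map_preimage) auto
  then show ?thesis by simp
qed

lemma add_open: "open V \<Longrightarrow> openin PX {Q. Q Y1 - Q Y2 - Q Y3 \<in> V}"
proof -
  assume V: "open V"
  have c: "\<And>Y. continuous_map PX euclideanreal (\<lambda>Q. Q Y)"
    by (rule continuous_map_product_projection) simp
  have "continuous_map PX euclideanreal (\<lambda>Q. Q Y1 - Q Y2 - Q Y3)"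
    by (intro continuous_map_diff c)
  then have "openin PX {Q \<in> topspace PX. Q Y1 - Q Y2 - Q Y3 \<in> V}" using V by (intro openin_continuous_map_preimage) auto
  then show ?thesis by simp
qed

lemma tests_open: "finite Gs \<Longrightarrow> openin PX {Q'. \<forall>G\<in>Gs. \<bar>Q' G - Q G\<bar> < r}"
proof (induction Gs rule: finite_induct)
  case empty
  then show ?case using openin_topspace[of PX] by simp
next
  case (insert G Gs)
  have "{Q'. \<forall>G'\<in>insert G Gs. \<bar>Q' G' - Q G'\<bar> < r} = {Q'. Q' G \<in> ball (Q G) r} \<inter> {Q'. \<forall>G\<in>Gs. \<bar>Q' G - Q G\<bar> < r}"
    by (auto simp: dist_real_def abs_minus_commute)
  then show ?case using insert coord_open[of "ball (Q G) r" G] by (simp add: openin_Int)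
qed

definition KK :: "'a set set \<Rightarrow> ('a set \<Rightarrow> real) set" where
  "KK A = PiE UNIV (\<lambda>X. if X \<in> A then {0..1} else {0})"

lemma KK_compact: "compactin PX (KK A)"
proof -
  have "\<forall>X\<in>UNIV. compactin euclideanreal (if X \<in> A then {0..1::real} else {0})"
    by (simp add: compactin_euclidean_iff)
  then show ?thesis unfolding KK_def using compactin_PiE by blast
qed

definition CC :: "'a set \<Rightarrow> 'a set set \<Rightarrow> ('i \<Rightarrow> 'a \<Rightarrow> 'a set \<Rightarrow> real) \<Rightarrow> 'a set \<Rightarrow> 'i \<Rightarrow> ('a set \<Rightarrow> real) set" where
  "CC \<Omega> A t E i = {Q \<in> KK A. Q \<in> pba \<Omega> A \<and> Q E = 1 \<and> apx \<Omega> A t i Q}"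

lemma KK_mem: "Q \<in> KK A \<longleftrightarrow> (\<forall>X. Q X \<in> (if X \<in> A then {0..1} else {0}))"
  unfolding KK_def PiE_iff extensional_def by blast

lemma sep_help: "openin PX T \<Longrightarrow> Q \<in> T \<Longrightarrow> (\<forall>Q'\<in>T. Q' \<notin> C) \<Longrightarrow>
   \<exists>T. openin PX T \<and> Q \<in> T \<and> T \<subseteq> topspace PX - C"
  by (intro exI[of _ T]) auto

lemma CC_closed:
  assumes fld: "is_field \<Omega> A"
  shows "closedin PX (CC \<Omega> A t E i)"
  unfolding closedin_def
proof
  show "CC \<Omega> A t E i \<subseteq> topspace PX" by (simp only: PX_top subset_UNIV)
  show "openin PX (topspace PX - CC \<Omega> A t E i)"
  proof (rule openin_subopen[THEN iffD2], rule ballI)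
    fix Q assume "Q \<in> topspace PX - CC \<Omega> A t E i"
    then have nQ: "Q \<notin> CC \<Omega> A t E i" by blast
    show "\<exists>T. openin PX T \<and> Q \<in> T \<and> T \<subseteq> topspace PX - CC \<Omega> A t E i"
    proof (cases "Q \<in> KK A")
      case False
      then obtain Y where Y: "Q Y \<notin> (if Y \<in> A then {0..1} else {0})" unfolding KK_mem by blast
      define V where "V = - (if Y \<in> A then {0..1::real} else {0})"
      have "open V" unfolding V_def by (auto intro: open_Compl)
      then have o: "openin PX {Q'. Q' Y \<in> V}" by (rule coord_open)
      have m: "Q \<in> {Q'. Q' Y \<in> V}" using Y unfolding V_def by simp
      have d: "\<forall>Q'\<in>{Q'. Q' Y \<in> V}. Q' \<notin> CC \<Omega> A t E i"
      proof
        fix Q' :: "'a set \<Rightarrow> real" assume "Q' \<in> {Q'. Q' Y \<in> V}"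
        then have "Q' \<notin> KK A" unfolding KK_mem V_def by blast
        then show "Q' \<notin> CC \<Omega> A t E i" unfolding CC_def by blast
      qed
      show ?thesis by (rule sep_help[OF o m d])
    next
      case K: True
      show ?thesis
      proof (cases "Q \<in> pba \<Omega> A")
        case False
        have nn: "\<forall>X\<in>A. 0 \<le> Q X" using K unfolding KK_mem by (metis atLeastAtMost_iff)
        show ?thesis
        proof (cases "Q \<Omega> = 1")
          case True
          then obtain E1 F1 where EF: "E1 \<in> A" "F1 \<in> A" "E1 \<inter> F1 = {}" "Q (E1 \<union> F1) \<noteq> Q E1 + Q F1"
            using False nn unfolding pba_def by blast
          have "open (- {0::real})" by auto
          then have o: "openin PX {Q'. Q' (E1 \<union> F1) - Q' E1 - Q' F1 \<in> - {0}}" by (rule add_open)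
          have m: "Q \<in> {Q'. Q' (E1 \<union> F1) - Q' E1 - Q' F1 \<in> - {0}}" using EF(4) by simp
          have d: "\<forall>Q'\<in>{Q'. Q' (E1 \<union> F1) - Q' E1 - Q' F1 \<in> - {0}}. Q' \<notin> CC \<Omega> A t E i"
          proof
            fix Q' :: "'a set \<Rightarrow> real" assume "Q' \<in> {Q'. Q' (E1 \<union> F1) - Q' E1 - Q' F1 \<in> - {0}}"
            then have "Q' (E1 \<union> F1) \<noteq> Q' E1 + Q' F1" by simp
            then have "Q' \<notin> pba \<Omega> A" using EF(1-3) pba_add by metis
            then show "Q' \<notin> CC \<Omega> A t E i" unfolding CC_def by blast
          qed
          show ?thesis by (rule sep_help[OF o m d])
        next
          case False
          have "open (- {1::real})" by auto
          then have o: "openin PX {Q'. Q' \<Omega> \<in> - {1}}" by (rule coord_open)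
          have m: "Q \<in> {Q'. Q' \<Omega> \<in> - {1}}" using False by simp
          have d: "\<forall>Q'\<in>{Q'. Q' \<Omega> \<in> - {1}}. Q' \<notin> CC \<Omega> A t E i"
          proof
            fix Q' :: "'a set \<Rightarrow> real" assume "Q' \<in> {Q'. Q' \<Omega> \<in> - {1}}"
            then have "Q' \<notin> pba \<Omega> A" using pba_top by fastforce
            then show "Q' \<notin> CC \<Omega> A t E i" unfolding CC_def by blast
          qed
          show ?thesis by (rule sep_help[OF o m d])
        qed
      next
        case P: True
        show ?thesis
        proof (cases "Q E = 1")
          case False
          have "open (- {1::real})" by auto
          then have o: "openin PX {Q'. Q' E \<in> - {1}}" by (rule coord_open)
          have m: "Q \<in> {Q'. Q' E \<in> - {1}}" using False by simp
          have d: "\<forall>Q'\<in>{Q'. Q' E \<in> - {1}}. Q' \<notin> CC \<Omega> A t E i"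
            unfolding CC_def by auto
          show ?thesis by (rule sep_help[OF o m d])
        next
          case True
          then have na: "\<not> apx \<Omega> A t i Q" using nQ K P unfolding CC_def by blast
          then obtain Gs \<epsilon> where G: "finite Gs" "Gs \<subseteq> A" "\<epsilon> > 0"
            and bad: "\<forall>R\<in>type_conv \<Omega> (t i). \<exists>G\<in>Gs. \<bar>R G - Q G\<bar> \<ge> \<epsilon>"
            unfolding apx_def by (meson not_less)
          have o: "openin PX {Q'. \<forall>G\<in>Gs. \<bar>Q' G - Q G\<bar> < \<epsilon>/2}" by (rule tests_open[OF G(1)])
          have m: "Q \<in> {Q'. \<forall>G\<in>Gs. \<bar>Q' G - Q G\<bar> < \<epsilon>/2}" using G(3) by simp
          have d: "\<forall>Q'\<in>{Q'. \<forall>G\<in>Gs. \<bar>Q' G - Q G\<bar> < \<epsilon>/2}. Q' \<notin> CC \<Omega> A t E i"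
          proof
            fix Q' :: "'a set \<Rightarrow> real" assume Q': "Q' \<in> {Q'. \<forall>G\<in>Gs. \<bar>Q' G - Q G\<bar> < \<epsilon>/2}"
            show "Q' \<notin> CC \<Omega> A t E i"
            proof
              assume "Q' \<in> CC \<Omega> A t E i"
              then have "apx \<Omega> A t i Q'" unfolding CC_def by simp
              moreover have "\<epsilon>/2 > 0" using G(3) by simp
              ultimately obtain R where R: "R \<in> type_conv \<Omega> (t i)" "\<forall>G\<in>Gs. \<bar>R G - Q' G\<bar> < \<epsilon>/2"
                using G(1,2) unfolding apx_def by blast
              then obtain G where GG: "G \<in> Gs" "\<bar>R G - Q G\<bar> \<ge> \<epsilon>" using bad by blast
              have "\<bar>R G - Q' G\<bar> < \<epsilon>/2" "\<bar>Q' G - Q G\<bar> < \<epsilon>/2" using R(2) Q' GG(1) by auto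
              then show False using GG(2) by linarith
            qed
          qed
          show ?thesis by (rule sep_help[OF o m d])
        qed
      qed
    qed
  qed
qed



lemma Q_props:
  assumes fld: "is_field \<Omega> A" and P: "P \<in> pba \<Omega> A" and E: "E \<in> A" and pE: "P E > 0"
  defines "Q \<equiv> (\<lambda>X. if X \<in> A then P (X \<inter> E) / P E else 0)"
  shows "Q \<in> pba \<Omega> A" "Q \<in> KK A" "Q E = 1"
proof -
  show "Q \<in> pba \<Omega> A" unfolding pba_def
  proof (intro CollectI conjI ballI impI)
    fix E1 F1 assume a: "E1 \<in> A" "F1 \<in> A" "E1 \<inter> F1 = {}"
    have "(E1 \<union> F1) \<inter> E = (E1 \<inter> E) \<union> (F1 \<inter> E)" by auto
    moreover have "P ((E1 \<inter> E) \<union> (F1 \<inter> E)) = P (E1 \<inter> E) + P (F1 \<inter> E)"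
      using pba_add[OF P field_Int[OF fld a(1) E] field_Int[OF fld a(2) E]] a(3) by auto
    ultimately show "Q (E1 \<union> F1) = Q E1 + Q F1" unfolding Q_def using a field_Un[OF fld a(1,2)]
      by (simp add: add_divide_distrib)
  next
    fix X assume "X \<in> A"
    then show "0 \<le> Q X" unfolding Q_def using pba_nonneg[OF P field_Int[OF fld _ E]] pE by simp
  next
    have "\<Omega> \<inter> E = E" using field_sub[OF fld E] by auto
    then show "Q \<Omega> = 1" unfolding Q_def using field_top[OF fld] pE by simp
  qed
  show "Q \<in> KK A" unfolding KK_mem
  proof
    fix X
    show "Q X \<in> (if X \<in> A then {0..1} else {0})"
    proof (cases "X \<in> A")
      case True
      have "P (X \<inter> E) \<le> P E" using pba_mono[OF fld P field_Int[OF fld True E] E] by auto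
      moreover have "0 \<le> P (X \<inter> E)" using pba_nonneg[OF P field_Int[OF fld True E]] .
      ultimately show ?thesis unfolding Q_def using True pE by simp
    qed (simp add: Q_def)
  qed
  show "Q E = 1" unfolding Q_def using E pE by simp
qed

theorem lemma6:
  fixes \<Omega> :: "'a set" and A :: "'a set set" and N :: "'i set"
    and M :: "'i \<Rightarrow> 'a set set" and t :: "'i \<Rightarrow> 'a \<Rightarrow> 'a set \<Rightarrow> real"
  assumes "type_space \<Omega> A N M t"
  shows "universally_consistent \<Omega> A N t \<longleftrightarrow>
    (\<forall>I. I \<subseteq> N \<longrightarrow> (\<forall>S. cc_component \<Omega> A t I S \<longrightarrow> consistent_on \<Omega> A t I S))"
proof
  assume R: "\<forall>I. I \<subseteq> N \<longrightarrow> (\<forall>S. cc_component \<Omega> A t I S \<longrightarrow> consistent_on \<Omega> A t I S)"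
  then show "universally_consistent \<Omega> A N t" unfolding universally_consistent_def by blast
next
  assume UC: "universally_consistent \<Omega> A N t"
  have ts: "type_space \<Omega> A N M t" by fact
  have fld: "is_field \<Omega> A" using ts_field[OF ts] .
  show "\<forall>I. I \<subseteq> N \<longrightarrow> (\<forall>S. cc_component \<Omega> A t I S \<longrightarrow> consistent_on \<Omega> A t I S)"
  proof (intro allI impI)
    fix I S assume IN: "I \<subseteq> N" and cc: "cc_component \<Omega> A t I S"
    show "consistent_on \<Omega> A t I S"
    proof (cases "finite I")
      case True
      then show ?thesis using UC IN cc unfolding universally_consistent_def by blast
    next
      case False
      then obtain i0 where i0: "i0 \<in> I" by (metis finite.emptyI ex_in_conv)
      obtain E where E: "E \<in> A" "E \<subseteq> S" and E1: "\<forall>\<omega>\<in>S. \<forall>i\<in>I. t i \<omega> E = 1"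
        and S: "S \<noteq> {}" "S \<subseteq> \<Omega>"
        using cc unfolding cc_component_def by blast
      obtain \<omega>0 where w0: "\<omega>0 \<in> S" using S by blast
      have "t i0 \<omega>0 E = 1" using E1 w0 i0 by blast
      moreover have "t i0 \<omega>0 {} = 0" using pba_empty[OF fld ts_pba[OF ts _ ]] i0 IN w0 S by blast
      ultimately have Ene: "E \<noteq> {}" by auto
      have EO: "E \<subseteq> \<Omega>" using E S by blast
      have E1': "\<forall>\<omega>\<in>E. t i \<omega> E = 1" if "i \<in> I" for i using E1 E(2) that by blast
      define \<U> where "\<U> = (\<lambda>i. CC \<Omega> A t E i) ` I"
      have "KK A \<inter> \<Inter>\<U> \<noteq> {}"
      proof -
        have cp: "compactin PX (KK A)" by (rule KK_compact)
        have cl: "\<forall>C\<in>\<U>. closedin PX C" unfolding \<U>_def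
          by (simp add: CC_closed[OF fld])
        have fip: "\<forall>\<F>. finite \<F> \<and> \<F> \<subseteq> \<U> \<longrightarrow> KK A \<inter> \<Inter>\<F> \<noteq> {}"
        proof (intro allI impI)
          fix \<F> assume F: "finite \<F> \<and> \<F> \<subseteq> \<U>"
          then obtain J where J: "J \<subseteq> I" "finite J" "\<F> = (\<lambda>i. CC \<Omega> A t E i) ` J"
            unfolding \<U>_def using finite_subset_image by metis
          define J' where "J' = insert i0 J"
          have J': "J' \<subseteq> I" "finite J'" using J i0 unfolding J'_def by auto
          have ccE: "cc_component \<Omega> A t J' E"
            unfolding cc_component_def using Ene EO E(1) E1' J'(1) by blast
          then have "consistent_on \<Omega> A t J' E" using UC J' IN unfolding universally_consistent_def by blast
          then obtain P where P: "P \<in> pba \<Omega> A" and PJ: "\<forall>j\<in>J'. P \<in> Pi_set \<Omega> A t j"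
            and inf: "Inf {P F | F. F \<in> A \<and> E \<subseteq> F} > 0" unfolding consistent_on_def by blast
          have "Inf {P F | F. F \<in> A \<and> E \<subseteq> F} \<le> P E"
          proof (rule cInf_lower)
            show "P E \<in> {P F | F. F \<in> A \<and> E \<subseteq> F}" using E(1) by blast
            show "bdd_below {P F | F. F \<in> A \<and> E \<subseteq> F}"
              by (rule bdd_belowI[of _ 0]) (use pba_nonneg[OF P] in blast)
          qed
          then have pE: "P E > 0" using inf by linarith
          define Q where "Q = (\<lambda>X. if X \<in> A then P (X \<inter> E) / P E else 0)"
          have Qp: "Q \<in> pba \<Omega> A" "Q \<in> KK A" "Q E = 1" using Q_props[OF fld P E(1) pE] unfolding Q_def by auto
          have "Q \<in> CC \<Omega> A t E j" if j: "j \<in> J'" for j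
          proof -
            have jN: "j \<in> N" using j J' IN by blast
            have "apx \<Omega> A t j P" using closure_apx[OF ts jN P] PJ j by blast
            then have "apx \<Omega> A t j Q" unfolding Q_def
              using cond_lemma[OF ts jN P _ E(1) _ pE] E1' j J' by blast
            then show ?thesis unfolding CC_def using Qp by blast
          qed
          then have "Q \<in> KK A \<inter> \<Inter>\<F>" using Qp J(3) unfolding J'_def by blast
          then show "KK A \<inter> \<Inter>\<F> \<noteq> {}" by blast
        qed
        show ?thesis using cp cl fip unfolding compactin_fip by blast
      qed
      then obtain Q where QK: "Q \<in> KK A" and QU: "Q \<in> \<Inter>\<U>" by blast
      have QC: "Q \<in> CC \<Omega> A t E i" if "i \<in> I" for i using QU that unfolding \<U>_def by blast
      have Qp: "Q \<in> pba \<Omega> A" and QE: "Q E = 1" using QC[OF i0] unfolding CC_def by auto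
      have QPi: "\<forall>i\<in>I. Q \<in> Pi_set \<Omega> A t i"
      proof
        fix i assume i: "i \<in> I"
        then have "apx \<Omega> A t i Q" using QC unfolding CC_def by blast
        then show "Q \<in> Pi_set \<Omega> A t i" using apx_closure[OF ts _ Qp] i IN by blast
      qed
      have "1 \<le> Inf {Q F | F. F \<in> A \<and> S \<subseteq> F}"
      proof (rule cInf_greatest)
        show "{Q F | F. F \<in> A \<and> S \<subseteq> F} \<noteq> {}" using field_top[OF fld] S by blast
        fix x assume "x \<in> {Q F | F. F \<in> A \<and> S \<subseteq> F}"
        then obtain F where F: "F \<in> A" "S \<subseteq> F" "x = Q F" by blast
        have "Q E \<le> Q F" using pba_mono[OF fld Qp E(1) F(1)] E(2) F(2) by blast
        then show "1 \<le> x" using QE F(3) by simp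
      qed
      then show ?thesis unfolding consistent_on_def using Qp QPi by force
    qed
  qed
qed


end
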